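(* Let $(I_t)_{t\in\mathbb{Z}}$ be a stochastic process such that there exists a family $(I_t^n)_{t\in\mathbb{Z}}$, $n\in\mathbb{N}$, of $\{0,1\}$-valued stationary stochastic processes with $P(I_0^n=1)>0$ for all $n\in\mathbb{N}$ and $$\mathcal{L}\bigl((I_t^n)_{t\in\{-u,\dots,v\}}\mid I_0^n=1\bigr)\Longrightarrow \mathcal{L}\bigl((I_t)_{t\in\{-u,\dots,v\}}\bigr)\quad (n\to\infty)$$ (weak convergence) for all $u,v\in\mathbb{N}$. Let $A\subset\mathbb{Z}$ with $0\in A$. Then $$P(I_t=1,\ t\in A)=P(I_{t-a}=1,\ t\in A)\quad\text{for all } a\in A.$$
   Context: $\mathcal{L}(\cdot\mid\cdot)$ denotes conditional law and $\Longrightarrow$ convergence in distribution. $\mathbb{N}=\{1,2,\dots\}$. *)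

theory Defs
  imports "HOL-Probability.Probability"
begin

text \<open>Finite-dimensional windows of a process, embedded in int => real (product topology),
  with value 0 outside the window.\<close>
definition window :: "int set \<Rightarrow> (int \<Rightarrow> 'a \<Rightarrow> real) \<Rightarrow> 'a \<Rightarrow> (int \<Rightarrow> real)" where
  "window T X = (\<lambda>\<omega> t. if t \<in> T then X t \<omega> else 0)"

definition weak_conv_fun :: "(nat \<Rightarrow> (int \<Rightarrow> real) measure) \<Rightarrow> (int \<Rightarrow> real) measure \<Rightarrow> bool" where
  "weak_conv_fun \<mu>s \<mu> \<longleftrightarrow>
     (\<forall>f :: (int \<Rightarrow> real) \<Rightarrow> real. continuous_on UNIV f \<and> bounded (range f) \<longrightarrow>
        (\<lambda>n. \<integral>x. f x \<partial>\<mu>s n) \<longlonglongrightarrow> (\<integral>x. f x \<partial>\<mu>))"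

definition law :: "'a measure \<Rightarrow> ('a \<Rightarrow> (int \<Rightarrow> real)) \<Rightarrow> (int \<Rightarrow> real) measure" where
  "law M Y = distr M borel Y"

definition cond_law :: "'a measure \<Rightarrow> ('a \<Rightarrow> (int \<Rightarrow> real)) \<Rightarrow> 'a set \<Rightarrow> (int \<Rightarrow> real) measure" where
  "cond_law M Y E = distr (uniform_measure M E) borel Y"

definition stationary :: "'a measure \<Rightarrow> (int \<Rightarrow> 'a \<Rightarrow> real) \<Rightarrow> bool" where
  "stationary M X \<longleftrightarrow> (\<forall>h::int. distr M borel (\<lambda>\<omega> t. X (t + h) \<omega>) = distr M borel (\<lambda>\<omega> t. X t \<omega>))"

end

theory Submission
  imports Defs
begin

lemma window_meas:
  assumes "\<And>t. X t \<in> borel_measurable M"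
  shows "window T X \<in> borel_measurable M"
  unfolding window_def
proof (rule measurable_coordinatewise_then_product)
  fix t show "(\<lambda>x. if t \<in> T then X t x else 0) \<in> borel_measurable M"
    using assms by (cases "t \<in> T") auto
qed

lemma shift_meas:
  fixes X :: "int \<Rightarrow> 'a \<Rightarrow> real"
  assumes "\<And>t. X t \<in> borel_measurable M"
  shows "(\<lambda>\<omega> t. X (t + h) \<omega>) \<in> borel_measurable M"
proof -
  have "(\<lambda>\<omega>. (\<lambda>\<omega> t. X (t + h) \<omega>) \<omega> i) \<in> borel_measurable M" for i
    using assms by simp
  then show ?thesis using measurable_coordinatewise_then_product[where f="\<lambda>\<omega> t. X (t + h) \<omega>" and M=M] by blast
qed

definition clamp :: "real \<Rightarrow> real" where "clamp y = max 0 (min 1 y)"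

lemma cont_clamp_prod:
  "continuous_on UNIV (\<lambda>x::int\<Rightarrow>real. clamp (\<Prod>t\<in>B. x (s t)))"
  unfolding clamp_def
  by (intro continuous_intros continuous_on_product_coordinates)

lemma bounded_clamp_prod:
  "bounded (range (\<lambda>x::int\<Rightarrow>real. clamp (\<Prod>t\<in>B. x (s t))))"
  unfolding clamp_def bounded_iff
  by (rule exI[of _ 1]) auto

lemma cont_h:
  "continuous_on UNIV (\<lambda>x::int\<Rightarrow>real. min 1 \<bar>x t * (x t - 1)\<bar>)"
  by (intro continuous_intros continuous_on_product_coordinates)

lemma bounded_h:
  "bounded (range (\<lambda>x::int\<Rightarrow>real. min 1 \<bar>x t * (x t - 1)\<bar>))"
  unfolding bounded_iff
  by (rule exI[of _ 1]) auto

lemma clamp_prod01: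
  assumes "finite B" "\<And>t. t \<in> B \<Longrightarrow> y t \<in> {0, 1::real}"
  shows "clamp (\<Prod>t\<in>B. y t) = (if \<forall>t\<in>B. y t = 1 then 1 else 0)"
proof (cases "\<forall>t\<in>B. y t = 1")
  case True
  then have "(\<Prod>t\<in>B. y t) = 1" by simp
  then show ?thesis using True by (simp add: clamp_def)
next
  case False
  then obtain t where "t \<in> B" "y t = 0" using assms(2) by blast
  then have "(\<Prod>t\<in>B. y t) = 0" using assms(1) by (metis prod_zero_iff)
  then show ?thesis using False by (simp add: clamp_def)
qed

lemma finite_case:
  fixes M :: "'a measure" and I :: "int \<Rightarrow> 'a \<Rightarrow> real"
    and Mn :: "nat \<Rightarrow> 'b measure" and In :: "nat \<Rightarrow> int \<Rightarrow> 'b \<Rightarrow> real"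
    and B T :: "int set" and a :: int
  assumes M: "prob_space M"
    and I_rv: "\<And>t. I t \<in> borel_measurable M"
    and Mn: "\<And>n. n \<ge> 1 \<Longrightarrow> prob_space (Mn n)"
    and In_rv: "\<And>n t. n \<ge> 1 \<Longrightarrow> In n t \<in> borel_measurable (Mn n)"
    and In_01: "\<And>n t \<omega>. n \<ge> 1 \<Longrightarrow> \<omega> \<in> space (Mn n) \<Longrightarrow> In n t \<omega> \<in> {0, 1}"
    and In_stat: "\<And>n. n \<ge> 1 \<Longrightarrow> stationary (Mn n) (In n)"
    and In_pos: "\<And>n. n \<ge> 1 \<Longrightarrow> measure (Mn n) {\<omega> \<in> space (Mn n). In n 0 \<omega> = 1} > 0"
    and conv: "weak_conv_fun
         (\<lambda>n. cond_law (Mn (n + 1)) (window T (In (n + 1)))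
                 {\<omega> \<in> space (Mn (n + 1)). In (n + 1) 0 \<omega> = 1})
         (law M (window T I))"
    and B: "finite B" "0 \<in> B" "a \<in> B" "B \<subseteq> T" "\<And>t. t \<in> B \<Longrightarrow> t - a \<in> T"
  shows "measure M {\<omega> \<in> space M. \<forall>t\<in>B. I t \<omega> = 1}
       = measure M {\<omega> \<in> space M. \<forall>t\<in>B. I (t - a) \<omega> = 1}"
proof -
  interpret P: prob_space M by (rule M)
  define W where "W = window T I"
  define m where "m n = Mn (n + 1)" for n
  define X where "X n = In (n + 1)" for n
  define E where "E n = {\<omega> \<in> space (m n). X n 0 \<omega> = 1}" for n
  define Wn where "Wn n = window T (X n)" for n
  define U where "U n = uniform_measure (m n) (E n)" for n
  have mprob: "prob_space (m n)" for n unfolding m_def by (rule Mn) simp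
  have Xrv[measurable]: "X n t \<in> borel_measurable (m n)" for n t
    unfolding m_def X_def by (rule In_rv) simp
  have X01: "\<omega> \<in> space (m n) \<Longrightarrow> X n t \<omega> \<in> {0, 1}" for n t \<omega>
    unfolding m_def X_def by (rule In_01) simp_all
  have Epos: "measure (m n) (E n) > 0" for n
    unfolding m_def X_def E_def by (rule In_pos) simp
  have Esets[measurable]: "E n \<in> sets (m n)" for n
    unfolding E_def by measurable
  have Efin: "emeasure (m n) (E n) \<noteq> \<infinity>" "emeasure (m n) (E n) \<noteq> 0" for n
    using Epos[of n] prob_space.emeasure_le_1[OF mprob, of n "E n"]
    by (auto simp: measure_def)
  have Wmeas: "W \<in> borel_measurable M" unfolding W_def by (rule window_meas) (rule I_rv)
  have Wnmeas: "Wn n \<in> borel_measurable (m n)" for n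
    unfolding Wn_def by (rule window_meas) (rule Xrv)
  have WnmeasU: "Wn n \<in> borel_measurable (U n)" for n
    unfolding U_def by (subst measurable_cong_sets[OF sets_uniform_measure refl]) (rule Wnmeas)
  have lim: "(\<lambda>n. \<integral>\<omega>. f (Wn n \<omega>) \<partial>U n) \<longlonglongrightarrow> (\<integral>\<omega>. f (W \<omega>) \<partial>M)"
    if "continuous_on UNIV f" "bounded (range f)" for f :: "(int \<Rightarrow> real) \<Rightarrow> real"
  proof -
    have fm: "f \<in> borel_measurable borel" using that(1) by (rule borel_measurable_continuous_onI)
    have "(\<lambda>n. \<integral>x. f x \<partial>cond_law (Mn (n + 1)) (window T (In (n + 1)))
                 {\<omega> \<in> space (Mn (n + 1)). In (n + 1) 0 \<omega> = 1}) \<longlonglongrightarrow> (\<integral>x. f x \<partial>law M (window T I))"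
      using conv that unfolding weak_conv_fun_def by blast
    moreover have "(\<integral>x. f x \<partial>cond_law (Mn (n + 1)) (window T (In (n + 1)))
                 {\<omega> \<in> space (Mn (n + 1)). In (n + 1) 0 \<omega> = 1}) = (\<integral>\<omega>. f (Wn n \<omega>) \<partial>U n)" for n
    proof -
      have "cond_law (Mn (n + 1)) (window T (In (n + 1))) {\<omega> \<in> space (Mn (n + 1)). In (n + 1) 0 \<omega> = 1}
          = distr (U n) borel (Wn n)"
        unfolding cond_law_def U_def E_def m_def X_def Wn_def by (rule refl)
      then show ?thesis using integral_distr[OF WnmeasU fm] by simp
    qed
    moreover have "(\<integral>x. f x \<partial>law M (window T I)) = (\<integral>\<omega>. f (W \<omega>) \<partial>M)"
      unfolding law_def W_def[symmetric] by (rule integral_distr[OF Wmeas fm])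
    ultimately show ?thesis by simp
  qed
  have AE01: "AE \<omega> in M. I t \<omega> \<in> {0, 1}" if tT: "t \<in> T" for t
  proof -
    define h where "h = (\<lambda>x::int\<Rightarrow>real. min 1 \<bar>x t * (x t - 1)\<bar>)"
    have hc: "continuous_on UNIV h" unfolding h_def by (rule cont_h)
    have hb: "bounded (range h)" unfolding h_def by (rule bounded_h)
    have hm: "h \<in> borel_measurable borel" using hc by (rule borel_measurable_continuous_onI)
    have "(\<integral>\<omega>. h (Wn n \<omega>) \<partial>U n) = (\<integral>\<omega>. 0 \<partial>U n)" for n
    proof (rule Bochner_Integration.integral_cong[OF refl])
      fix \<omega> assume "\<omega> \<in> space (U n)"
      then have "X n t \<omega> \<in> {0, 1}" using X01 by (simp add: U_def)
      then show "h (Wn n \<omega>) = 0" using tT by (auto simp: h_def Wn_def window_def)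
    qed
    then have "(\<lambda>n. \<integral>\<omega>. h (Wn n \<omega>) \<partial>U n) = (\<lambda>n. 0)" by simp
    with lim[OF hc hb] have "(\<lambda>n. 0::real) \<longlonglongrightarrow> (\<integral>\<omega>. h (W \<omega>) \<partial>M)" by simp
    then have i0: "(\<integral>\<omega>. h (W \<omega>) \<partial>M) = 0" using LIMSEQ_unique tendsto_const by blast
    have hWm: "(\<lambda>\<omega>. h (W \<omega>)) \<in> borel_measurable M" using measurable_compose[OF Wmeas hm] by simp
    have "integrable M (\<lambda>\<omega>. h (W \<omega>))"
      by (rule P.integrable_const_bound[where B=1]) (use hWm in \<open>auto simp: h_def\<close>)
    then have "AE \<omega> in M. h (W \<omega>) = 0"
      using integral_nonneg_eq_0_iff_AE[of M "\<lambda>\<omega>. h (W \<omega>)"] i0 by (simp add: h_def)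
    then show ?thesis
      by eventually_elim (use tT in \<open>auto simp: h_def W_def window_def min_def split: if_splits\<close>)
  qed
  have key: "measure M {\<omega> \<in> space M. \<forall>t\<in>B. I (s t) \<omega> = 1}
      = lim (\<lambda>n. measure (m n) {\<omega> \<in> space (m n). \<forall>t\<in>B. X n (s t) \<omega> = 1} / measure (m n) (E n))"
     if sT: "\<And>t. t \<in> B \<Longrightarrow> s t \<in> T" and s0: "\<exists>b\<in>B. s b = 0" for s
  proof -
    define F where "F = (\<lambda>x::int\<Rightarrow>real. clamp (\<Prod>t\<in>B. x (s t)))"
    have Fc: "continuous_on UNIV F" unfolding F_def by (rule cont_clamp_prod)
    have Fb: "bounded (range F)" unfolding F_def by (rule bounded_clamp_prod)
    have Fm: "F \<in> borel_measurable borel" using Fc by (rule borel_measurable_continuous_onI)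
    define S where "S = {\<omega> \<in> space M. \<forall>t\<in>B. I (s t) \<omega> = 1}"
    define Sn where "Sn n = {\<omega> \<in> space (m n). \<forall>t\<in>B. X n (s t) \<omega> = 1}" for n
    have Ssets: "S \<in> sets M" unfolding S_def using B(1) I_rv by measurable
    have Snsets: "Sn n \<in> sets (m n)" for n unfolding Sn_def using B(1) by measurable
    have "AE \<omega> in M. \<forall>t\<in>B. I (s t) \<omega> \<in> {0, 1}"
      using B(1) by (rule AE_finite_allI) (rule AE01[OF sT])
    then have ae: "AE \<omega> in M. F (W \<omega>) = indicator S \<omega>"
      using AE_space
    proof eventually_elim
      case (elim \<omega>)
      have "(\<Prod>t\<in>B. W \<omega> (s t)) = (\<Prod>t\<in>B. I (s t) \<omega>)"
        by (rule prod.cong) (auto simp: W_def window_def sT)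
      then have "F (W \<omega>) = clamp (\<Prod>t\<in>B. I (s t) \<omega>)" by (simp add: F_def)
      also have "\<dots> = (if \<forall>t\<in>B. I (s t) \<omega> = 1 then 1 else 0)"
        by (rule clamp_prod01[OF B(1)]) (use elim in auto)
      finally show ?case using elim by (simp add: S_def indicator_def)
    qed
    have FWm: "(\<lambda>\<omega>. F (W \<omega>)) \<in> borel_measurable M" using measurable_compose[OF Wmeas Fm] by simp
    have a: "(\<integral>\<omega>. F (W \<omega>) \<partial>M) = measure M S"
    proof -
      have "(\<integral>\<omega>. F (W \<omega>) \<partial>M) = (\<integral>\<omega>. indicator S \<omega> \<partial>M)"
        by (rule integral_cong_AE[OF FWm _ ae]) (use Ssets in simp)
      also have "\<dots> = measure M S"
        using Bochner_Integration.integral_indicator[of M S] Ssets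
        by (simp add: Int_absorb2 sets.sets_into_space)
      finally show ?thesis .
    qed
    have b: "(\<integral>\<omega>. F (Wn n \<omega>) \<partial>U n) = measure (m n) (Sn n) / measure (m n) (E n)" for n
    proof -
      have "(\<integral>\<omega>. F (Wn n \<omega>) \<partial>U n) = (\<integral>\<omega>. indicator (Sn n) \<omega> \<partial>U n)"
      proof (rule Bochner_Integration.integral_cong[OF refl])
        fix \<omega> assume "\<omega> \<in> space (U n)"
        then have om: "\<omega> \<in> space (m n)" by (simp add: U_def)
        have "(\<Prod>t\<in>B. Wn n \<omega> (s t)) = (\<Prod>t\<in>B. X n (s t) \<omega>)"
          by (rule prod.cong) (auto simp: Wn_def window_def sT)
        then have "F (Wn n \<omega>) = clamp (\<Prod>t\<in>B. X n (s t) \<omega>)" by (simp add: F_def)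
        also have "\<dots> = (if \<forall>t\<in>B. X n (s t) \<omega> = 1 then 1 else 0)"
          by (rule clamp_prod01[OF B(1)]) (use X01[OF om] in auto)
        finally show "F (Wn n \<omega>) = indicator (Sn n) \<omega>" using om by (simp add: Sn_def indicator_def)
      qed
      also have "\<dots> = measure (U n) (Sn n)"
        using Bochner_Integration.integral_indicator[of "U n" "Sn n"] Snsets[of n]
        by (simp add: U_def Int_absorb2 sets.sets_into_space)
      also have "\<dots> = measure (m n) (E n \<inter> Sn n) / measure (m n) (E n)"
        unfolding U_def by (rule measure_uniform_measure[OF Efin(2) Efin(1) Snsets])
      also have "E n \<inter> Sn n = Sn n"
        using s0 by (auto simp: E_def Sn_def)
      finally show ?thesis .
    qed
    show ?thesis using lim[OF Fc Fb] unfolding a b S_def Sn_def by (simp add: limI)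
  qed
  have stat: "measure (m n) {\<omega> \<in> space (m n). \<forall>t\<in>B. X n t \<omega> = 1}
      = measure (m n) {\<omega> \<in> space (m n). \<forall>t\<in>B. X n (t - a) \<omega> = 1}" for n
  proof -
    have st: "stationary (m n) (X n)" unfolding m_def X_def by (rule In_stat) simp
    then have d: "distr (m n) borel (\<lambda>\<omega> t. X n (t + - a) \<omega>) = distr (m n) borel (\<lambda>\<omega> t. X n t \<omega>)"
      unfolding stationary_def by blast
    define C where "C = {x::int\<Rightarrow>real. \<forall>t\<in>B. x t = 1}"
    have Cs: "C \<in> sets borel"
    proof -
      have "C = (\<Inter>t\<in>B. (\<lambda>x. x t) -` {1})" unfolding C_def by auto
      also have "\<dots> \<in> sets borel"
      proof (cases "B = {}")
        case True then show ?thesis by simp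
      next
        case False
        show ?thesis
        proof (rule sets.finite_INT[OF B(1) False])
          fix t
          have "(\<lambda>x::int\<Rightarrow>real. x t) -` {1} \<inter> space borel \<in> sets borel"
            by (rule measurable_sets[OF measurable_product_coordinates]) simp
          then show "(\<lambda>x::int\<Rightarrow>real. x t) -` {1} \<in> sets borel" by simp
        qed
      qed
      finally show ?thesis .
    qed
    have m1: "(\<lambda>\<omega> t. X n (t + - a) \<omega>) \<in> borel_measurable (m n)" by (rule shift_meas) (rule Xrv)
    have m2: "(\<lambda>\<omega> t. X n t \<omega>) \<in> borel_measurable (m n)" using shift_meas[of "X n" "m n" 0] Xrv by simp
    have "measure (distr (m n) borel (\<lambda>\<omega> t. X n (t + - a) \<omega>)) C
        = measure (distr (m n) borel (\<lambda>\<omega> t. X n t \<omega>)) C" using d by simp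
    then show ?thesis
      unfolding measure_distr[OF m1 Cs] measure_distr[OF m2 Cs]
      by (simp add: C_def vimage_def Int_def conj_commute)
  qed
  have k1: "measure M {\<omega> \<in> space M. \<forall>t\<in>B. I t \<omega> = 1}
      = lim (\<lambda>n. measure (m n) {\<omega> \<in> space (m n). \<forall>t\<in>B. X n t \<omega> = 1} / measure (m n) (E n))"
    using key[of "\<lambda>t. t"] B by auto
  have k2: "measure M {\<omega> \<in> space M. \<forall>t\<in>B. I (t - a) \<omega> = 1}
      = lim (\<lambda>n. measure (m n) {\<omega> \<in> space (m n). \<forall>t\<in>B. X n (t - a) \<omega> = 1} / measure (m n) (E n))"
    using key[of "\<lambda>t. t - a"] B by auto
  show ?thesis unfolding k1 k2 stat ..
qed

theorem theorem2p1:
  fixes M :: "'a measure" and I :: "int \<Rightarrow> 'a \<Rightarrow> real"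
    and Mn :: "nat \<Rightarrow> 'b measure" and In :: "nat \<Rightarrow> int \<Rightarrow> 'b \<Rightarrow> real"
    and A :: "int set" and a :: int
  assumes M: "prob_space M"
    and I_rv: "\<And>t. I t \<in> borel_measurable M"
    and Mn: "\<And>n. n \<ge> 1 \<Longrightarrow> prob_space (Mn n)"
    and In_rv: "\<And>n t. n \<ge> 1 \<Longrightarrow> In n t \<in> borel_measurable (Mn n)"
    and In_01: "\<And>n t \<omega>. n \<ge> 1 \<Longrightarrow> \<omega> \<in> space (Mn n) \<Longrightarrow> In n t \<omega> \<in> {0, 1}"
    and In_stat: "\<And>n. n \<ge> 1 \<Longrightarrow> stationary (Mn n) (In n)"
    and In_pos: "\<And>n. n \<ge> 1 \<Longrightarrow> measure (Mn n) {\<omega> \<in> space (Mn n). In n 0 \<omega> = 1} > 0"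
    and conv: "\<And>u v :: nat. u \<ge> 1 \<Longrightarrow> v \<ge> 1 \<Longrightarrow>
       weak_conv_fun
         (\<lambda>n. cond_law (Mn (n + 1)) (window {- int u..int v} (In (n + 1)))
                 {\<omega> \<in> space (Mn (n + 1)). In (n + 1) 0 \<omega> = 1})
         (law M (window {- int u..int v} I))"
    and A0: "0 \<in> A"
    and aA: "a \<in> A"
  shows "measure M {\<omega> \<in> space M. \<forall>t\<in>A. I t \<omega> = 1}
       = measure M {\<omega> \<in> space M. \<forall>t\<in>A. I (t - a) \<omega> = 1}"
proof -
  interpret P: prob_space M by (rule M)
  define K :: nat where "K = nat \<bar>a\<bar> + 1"
  define Ak where "Ak k = A \<inter> {- int (k + K)..int (k + K)}" for k
  define S where "S k = {\<omega> \<in> space M. \<forall>t\<in>Ak k. I t \<omega> = 1}" for k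
  define S' where "S' k = {\<omega> \<in> space M. \<forall>t\<in>Ak k. I (t - a) \<omega> = 1}" for k
  have eq: "measure M (S k) = measure M (S' k)" for k
  proof -
    define u :: nat where "u = 2 * (k + K)"
    have u1: "u \<ge> 1" unfolding u_def K_def by simp
    show ?thesis unfolding S_def S'_def
    proof (rule finite_case[OF M I_rv Mn In_rv In_01 In_stat In_pos conv[OF u1 u1]])
      show "finite (Ak k)" unfolding Ak_def by simp
      show "0 \<in> Ak k" unfolding Ak_def using A0 by simp
      show "a \<in> Ak k" unfolding Ak_def K_def using aA by auto
      show "Ak k \<subseteq> {- int u..int u}" unfolding Ak_def u_def by auto
      show "t - a \<in> {- int u..int u}" if "t \<in> Ak k" for t
        using that unfolding Ak_def u_def K_def by auto
    qed
  qed
  have Ssets: "S k \<in> sets M" "S' k \<in> sets M" for k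
  proof -
    have f: "finite (Ak k)" unfolding Ak_def by simp
    show "S k \<in> sets M" unfolding S_def using f I_rv by measurable
    show "S' k \<in> sets M" unfolding S'_def using f I_rv by measurable
  qed
  have mono: "Ak k \<subseteq> Ak k'" if "k \<le> k'" for k k'
    using that unfolding Ak_def by auto
  have dec: "decseq S" "decseq S'"
    unfolding decseq_def S_def S'_def using mono by blast+
  have cover: "t \<in> A \<Longrightarrow> t \<in> Ak (nat \<bar>t\<bar>)" for t
    unfolding Ak_def by auto
  have i1: "(\<Inter>k. S k) = {\<omega> \<in> space M. \<forall>t\<in>A. I t \<omega> = 1}"
    unfolding S_def Ak_def using cover unfolding Ak_def by blast
  have i2: "(\<Inter>k. S' k) = {\<omega> \<in> space M. \<forall>t\<in>A. I (t - a) \<omega> = 1}"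
    unfolding S'_def Ak_def using cover unfolding Ak_def by blast
  have l1: "(\<lambda>k. measure M (S k)) \<longlonglongrightarrow> measure M {\<omega> \<in> space M. \<forall>t\<in>A. I t \<omega> = 1}"
    using P.finite_Lim_measure_decseq[of S] Ssets dec i1 by auto
  have l2: "(\<lambda>k. measure M (S k)) \<longlonglongrightarrow> measure M {\<omega> \<in> space M. \<forall>t\<in>A. I (t - a) \<omega> = 1}"
    using P.finite_Lim_measure_decseq[of S'] Ssets dec i2 eq by auto
  show ?thesis using LIMSEQ_unique[OF l1 l2] .
qed

end
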